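(* Let $r \geq 2$ and $n \geq 1$ be integers, and let $\Gamma$ be an unbalanced signed graph on $n$ vertices that is $\mathcal{K}^-_{r+1}$-free, i.e., $\Gamma$ contains no unbalanced signed complete graph on $r+1$ vertices as a (signed) subgraph. Then the number of edges of $\Gamma$ satisfies $$e(\Gamma) \leq \frac{n(n-1)}{2} - (n - r).$$
   Context: A signed graph $\Gamma=(G,\sigma)$ is a simple graph $G$ (the underlying graph) together with a sign function $\sigma: E(G)\to\{-1,+1\}$. A cycle is positive if it contains an even number of negative edges and negative otherwise; $\Gamma$ is balanced if all its cycles are positive and unbalanced otherwise. $\mathcal{K}^-_{k}$ denotes the set of unbalanced signed complete graphs on $k$ vertices (signed graphs whose underlying graph is $K_k$ and which are unbalanced), and $\Gamma$ is $\mathcal{K}^-_{k}$-free if no subgraph of $\Gamma$, with the inherited signs, belongs to $\mathcal{K}^-_{k}$. $e(\Gamma)$ denotes the number of edges of $\Gamma$. *)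

theory Defs
  imports Complex_Main
begin

definition signed_graph :: "'a set \<Rightarrow> 'a set set \<Rightarrow> ('a set \<Rightarrow> int) \<Rightarrow> bool" where
  "signed_graph V E sigma \<longleftrightarrow> finite V \<and> (\<forall>e\<in>E. e \<subseteq> V \<and> card e = 2)
     \<and> (\<forall>e\<in>E. sigma e = 1 \<or> sigma e = -1)"

definition is_cycle :: "'a set \<Rightarrow> 'a set set \<Rightarrow> 'a list \<Rightarrow> bool" where
  "is_cycle V E vs \<longleftrightarrow> distinct vs \<and> length vs \<ge> 3 \<and> set vs \<subseteq> V
     \<and> (\<forall>i < length vs. {vs ! i, vs ! ((i + 1) mod length vs)} \<in> E)"

definition cycle_edges :: "'a list \<Rightarrow> 'a set set" where
  "cycle_edges vs = {{vs ! i, vs ! ((i + 1) mod length vs)} | i. i < length vs}"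

definition positive_cycle :: "('a set \<Rightarrow> int) \<Rightarrow> 'a list \<Rightarrow> bool" where
  "positive_cycle sigma vs \<longleftrightarrow> even (card {e \<in> cycle_edges vs. sigma e = -1})"

definition balanced :: "'a set \<Rightarrow> 'a set set \<Rightarrow> ('a set \<Rightarrow> int) \<Rightarrow> bool" where
  "balanced V E sigma \<longleftrightarrow> (\<forall>vs. is_cycle V E vs \<longrightarrow> positive_cycle sigma vs)"

definition unbalanced_Kk_free :: "nat \<Rightarrow> 'a set \<Rightarrow> 'a set set \<Rightarrow> ('a set \<Rightarrow> int) \<Rightarrow> bool" where
  "unbalanced_Kk_free k V E sigma \<longleftrightarrow>
     \<not> (\<exists>S \<subseteq> V. card S = k \<and> (\<forall>x\<in>S. \<forall>y\<in>S. x \<noteq> y \<longrightarrow> {x, y} \<in> E)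
          \<and> \<not> balanced S {e \<in> E. e \<subseteq> S} sigma)"

end

theory Submission
  imports Defs
begin

fun nc :: "('a set \<Rightarrow> int) \<Rightarrow> 'a list \<Rightarrow> nat" where
  "nc s (x # y # zs) = (if s {x,y} = -1 then 1 else 0) + nc s (y # zs)"
| "nc s _ = 0"

fun walk :: "'a set set \<Rightarrow> 'a list \<Rightarrow> bool" where
  "walk E (x # y # zs) = ({x,y} \<in> E \<and> walk E (y # zs))"
| "walk E _ = True"

lemma nc_append: "nc s (xs @ y # ys) = nc s (xs @ [y]) + nc s (y # ys)"
  by (induction xs rule: induct_list012) auto

lemma walk_append: "walk E (xs @ y # ys) \<longleftrightarrow> walk E (xs @ [y]) \<and> walk E (y # ys)"
  by (induction xs rule: induct_list012) auto

lemma nc_sum: "nc s p = (\<Sum>i<length p - 1. if s {p!i, p!Suc i} = -1 then 1 else 0)"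
proof (induction s p rule: nc.induct)
  case (1 s x y zs)
  show ?case using 1 by (simp add: sum.lessThan_Suc_shift del: sum.lessThan_Suc)
qed auto

lemma walk_idx: "walk E p \<longleftrightarrow> (\<forall>i. Suc i < length p \<longrightarrow> {p!i, p!Suc i} \<in> E)"
proof (induction E p rule: walk.induct)
  case (1 E x y zs)
  have "(\<forall>i. Suc i < length (x#y#zs) \<longrightarrow> {(x#y#zs)!i, (x#y#zs)!Suc i} \<in> E)
     \<longleftrightarrow> (\<forall>i < Suc (length (y#zs) - 1). {(x#y#zs)!i, (x#y#zs)!Suc i} \<in> E)" by auto
  also have "\<dots> \<longleftrightarrow> {x,y} \<in> E \<and> (\<forall>i < length (y#zs) - 1. {(y#zs)!i, (y#zs)!Suc i} \<in> E)"
    unfolding All_less_Suc2 by simp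
  finally show ?case using 1 by auto
qed auto

lemma nth_cl0: "i < length vs \<Longrightarrow> (vs @ [hd vs]) ! i = vs ! i"
  by (simp add: nth_append)

lemma nth_cl: "i < length vs \<Longrightarrow> (vs @ [hd vs]) ! Suc i = vs ! (Suc i mod length vs)"
proof (cases "Suc i < length vs")
  case True then show ?thesis by (simp add: nth_append)
next
  case False
  assume "i < length vs"
  then have "Suc i = length vs" using False by simp
  then have "vs \<noteq> []" by auto
  then show ?thesis using \<open>Suc i = length vs\<close> by (simp add: nth_append hd_conv_nth)
qed

lemma cyc_walk:
  assumes "vs \<noteq> []"
  shows "walk E (vs @ [hd vs]) \<longleftrightarrow> (\<forall>i<length vs. {vs!i, vs!((i+1) mod length vs)} \<in> E)"
  unfolding walk_idx by (auto simp: nth_cl nth_cl0)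

lemma ed_inj:
  assumes "distinct vs" "3 \<le> length vs"
  shows "inj_on (\<lambda>i. {vs!i, vs!((i+1) mod length vs)}) {..<length vs}"
proof (rule inj_onI)
  fix i j assume i: "i \<in> {..<length vs}" and j: "j \<in> {..<length vs}"
    and eq: "{vs!i, vs!((i+1) mod length vs)} = {vs!j, vs!((j+1) mod length vs)}"
  let ?k = "length vs"
  have ik: "i < ?k" and jk: "j < ?k" using i j by auto
  have kp: "?k > 0" using assms by auto
  have m1: "(i+1) mod ?k < ?k" "(j+1) mod ?k < ?k" using kp by auto
  have d: "\<And>a b. a < ?k \<Longrightarrow> b < ?k \<Longrightarrow> vs!a = vs!b \<longleftrightarrow> a = b"
    using assms(1) nth_eq_iff_index_eq by blast
  show "i = j"
  proof (rule ccontr)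
    assume "i \<noteq> j"
    then have "vs!i \<noteq> vs!j" using d ik jk by blast
    then have "vs!i = vs!((j+1) mod ?k) \<and> vs!((i+1) mod ?k) = vs!j" using eq by (auto simp: doubleton_eq_iff)
    then have a: "i = (j+1) mod ?k" and b: "(i+1) mod ?k = j" using d ik jk m1 by auto
    have "i = (i + 2) mod ?k" using a b by (metis Suc_eq_plus1 add_2_eq_Suc' mod_Suc_eq)
    show False
    proof (cases "i + 2 < ?k")
      case True then show False using \<open>i = (i + 2) mod ?k\<close> by simp
    next
      case False
      then have "(i + 2) mod ?k = (i + 2 - ?k) mod ?k" by (simp add: le_mod_geq)
      also have "\<dots> = i + 2 - ?k" using ik assms(2) by (intro mod_less) linarith
      finally show False using \<open>i = (i + 2) mod ?k\<close> assms(2) False by linarith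
    qed
  qed
qed

lemma card_filter_sum: assumes "finite A" shows "card {x\<in>A. P x} = (\<Sum>x\<in>A. if P x then 1 else 0)"
proof -
  have "{x\<in>A. P x} = A \<inter> Collect P" by auto
  then show ?thesis using assms by (simp add: sum.If_cases)
qed

lemma cyc_nc:
  assumes "distinct vs" "3 \<le> length vs"
  shows "card {e \<in> cycle_edges vs. s e = -1} = nc s (vs @ [hd vs])"
proof -
  let ?k = "length vs"
  let ?ed = "\<lambda>i. {vs!i, vs!((i+1) mod ?k)}"
  have ce: "cycle_edges vs = ?ed ` {..<?k}" unfolding cycle_edges_def by auto
  have "{e \<in> cycle_edges vs. s e = -1} = ?ed ` {i\<in>{..<?k}. s (?ed i) = -1}" unfolding ce by auto
  moreover have "card (?ed ` {i\<in>{..<?k}. s (?ed i) = -1}) = card {i\<in>{..<?k}. s (?ed i) = -1}"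
    by (rule card_image[OF inj_on_subset[OF ed_inj[OF assms]]]) auto
  ultimately have "card {e \<in> cycle_edges vs. s e = -1} = card {i\<in>{..<?k}. s (?ed i) = -1}"
    by simp
  also have "\<dots> = (\<Sum>i<?k. if s (?ed i) = -1 then 1 else 0)"
    using card_filter_sum[of "{..<?k}" "\<lambda>i. s (?ed i) = -1"] by simp
  also have "\<dots> = nc s (vs @ [hd vs])" unfolding nc_sum
    by (intro sum.cong) (auto simp: nth_cl nth_cl0)
  finally show ?thesis .
qed

definition cw :: "'a set \<Rightarrow> 'a set set \<Rightarrow> ('a set \<Rightarrow> int) \<Rightarrow> 'a list \<Rightarrow> bool" where
  "cw V E s w \<longleftrightarrow> w \<noteq> [] \<and> hd w = last w \<and> set w \<subseteq> V \<and> walk E w \<and> odd (nc s w)"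

lemma split_repeat:
  assumes "cw V E s (P @ [a] @ M @ [a] @ Q)" "Q \<noteq> []"
  shows "\<exists>w'. cw V E s w' \<and> length w' < length (P @ [a] @ M @ [a] @ Q)"
proof -
  let ?w = "P @ [a] @ M @ [a] @ Q"
  have n: "nc s ?w = nc s (P@[a]) + nc s (a # M @ [a]) + nc s (a # Q)"
    using nc_append[of s P a "M @ a # Q"] nc_append[of s "a # M" a Q] by simp
  have wk: "walk E ?w \<longleftrightarrow> walk E (P@[a]) \<and> walk E (a # M @ [a]) \<and> walk E (a # Q)"
    using walk_append[of E P a "M @ a # Q"] walk_append[of E "a # M" a Q] by simp
  have n2: "nc s (P @ a # Q) = nc s (P@[a]) + nc s (a # Q)" by (rule nc_append)
  have w2: "walk E (P @ a # Q) \<longleftrightarrow> walk E (P@[a]) \<and> walk E (a # Q)" by (rule walk_append)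
  have h2: "hd (P @ a # Q) = hd ?w" by (cases P) auto
  have l2: "last (P @ a # Q) = last ?w" using assms(2) by simp
  have c1: "cw V E s (a # M @ [a])" if "odd (nc s (a # M @ [a]))"
    using assms(1) that wk unfolding cw_def by auto
  have c2: "cw V E s (P @ a # Q)" if "odd (nc s (P @ a # Q))"
    using assms(1) that wk w2 h2 l2 unfolding cw_def by auto
  have "odd (nc s (a # M @ [a])) \<or> odd (nc s (P @ a # Q))"
    using assms(1) n n2 unfolding cw_def by auto
  moreover have "length (a # M @ [a]) < length ?w" "length (P @ a # Q) < length ?w"
    using assms(2) by (auto simp: length_greater_0_conv[symmetric] simp del: length_greater_0_conv)
  ultimately show ?thesis using c1 c2 by blast
qed

lemma split_chord:
  assumes "cw V E s (P @ [a] @ M @ [b] @ Q)" "{a,b} \<in> E" "M \<noteq> []" "length P + length Q \<ge> 2"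
  shows "\<exists>w'. cw V E s w' \<and> length w' < length (P @ [a] @ M @ [b] @ Q)"
proof -
  let ?w = "P @ [a] @ M @ [b] @ Q"
  have n: "nc s ?w = nc s (P@[a]) + nc s (a # M @ [b]) + nc s (b # Q)"
    using nc_append[of s P a "M @ b # Q"] nc_append[of s "a # M" b Q] by simp
  have wk: "walk E ?w \<longleftrightarrow> walk E (P@[a]) \<and> walk E (a # M @ [b]) \<and> walk E (b # Q)"
    using walk_append[of E P a "M @ b # Q"] walk_append[of E "a # M" b Q] by simp
  have n1: "nc s (a # M @ [b, a]) = nc s (a # M @ [b]) + nc s [b, a]"
    using nc_append[of s "a # M" b "[a]"] by simp
  have w1: "walk E (a # M @ [b, a]) \<longleftrightarrow> walk E (a # M @ [b]) \<and> walk E [b, a]"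
    using walk_append[of E "a # M" b "[a]"] by simp
  have n2: "nc s (P @ a # b # Q) = nc s (P@[a]) + nc s [a,b] + nc s (b # Q)"
    using nc_append[of s P a "b # Q"] by simp
  have w2: "walk E (P @ a # b # Q) \<longleftrightarrow> walk E (P@[a]) \<and> walk E [a,b] \<and> walk E (b # Q)"
    using walk_append[of E P a "b # Q"] by simp
  have ba: "nc s [b,a] = nc s [a,b]" "walk E [b,a]" "walk E [a,b]" using assms(2) by (auto simp: insert_commute)
  have h2: "hd (P @ a # b # Q) = hd ?w" by (cases P) auto
  have l2: "last (P @ a # b # Q) = last ?w" by (cases Q) auto
  have c1: "cw V E s (a # M @ [b, a])" if "odd (nc s (a # M @ [b, a]))"
    using assms(1) that wk w1 ba unfolding cw_def by auto
  have c2: "cw V E s (P @ a # b # Q)" if "odd (nc s (P @ a # b # Q))"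
    using assms(1) that wk w2 h2 l2 ba unfolding cw_def by auto
  have "odd (nc s (a # M @ [b, a])) \<or> odd (nc s (P @ a # b # Q))"
    using assms(1) n n1 n2 ba unfolding cw_def by auto
  moreover have "length (a # M @ [b, a]) < length ?w" "length (P @ a # b # Q) < length ?w"
    using assms(3,4) by (auto simp: length_greater_0_conv[symmetric] simp del: length_greater_0_conv)
  ultimately show ?thesis using c1 c2 by blast
qed

fun fan :: "('a set \<Rightarrow> int) \<Rightarrow> 'a \<Rightarrow> 'a list \<Rightarrow> nat" where
  "fan s u (x # y # zs) = nc s [u,x,y,u] + fan s u (y # zs)"
| "fan s u _ = 0"

lemma fan_par: "length p \<ge> 2 \<Longrightarrow> even (fan s u p + nc s p + nc s [u, hd p] + nc s [last p, u])"
proof (induction s u p rule: fan.induct)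
  case (1 s u x y zs)
  show ?case
  proof (cases zs)
    case Nil then show ?thesis by (auto simp: insert_commute)
  next
    case (Cons z zs')
    then have "even (fan s u (y#zs) + nc s (y#zs) + nc s [u, y] + nc s [last (y#zs), u])"
      using 1 by simp
    moreover have "fan s u (x#y#zs) + nc s (x#y#zs) + nc s [u, hd (x#y#zs)] + nc s [last (x#y#zs), u]
      = 2 * (nc s [u,x] + nc s [x,y]) + (fan s u (y#zs) + nc s (y#zs) + nc s [u, y] + nc s [last (y#zs), u])"
      using Cons by (simp add: insert_commute split del: if_split)
    ultimately show ?thesis by presburger
  qed
qed auto

lemma fan_odd: "odd (fan s u p) \<Longrightarrow> \<exists>i. Suc i < length p \<and> odd (nc s [u, p!i, p!Suc i, u])"
proof (induction s u p rule: fan.induct)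
  case (1 s u x y zs)
  show ?case
  proof (cases "odd (nc s [u,x,y,u])")
    case True then show ?thesis by (intro exI[of _ 0]) auto
  next
    case False
    then have "odd (fan s u (y # zs))" using 1(2) by simp
    then obtain i where "Suc i < length (y#zs)" "odd (nc s [u, (y#zs)!i, (y#zs)!Suc i, u])" using 1(1) by blast
    then show ?thesis by (intro exI[of _ "Suc i"]) auto
  qed
qed auto

lemma par_aux: "even (a + b + c + c) \<Longrightarrow> odd (b::nat) \<Longrightarrow> odd a" by (cases "even c") (simp_all add: even_add)

lemma wheel:
  assumes "cw V E s w" "u \<in> V" "\<forall>x\<in>set w. {u,x} \<in> E" "length w \<ge> 5"
  shows "\<exists>w'. cw V E s w' \<and> length w' < length w"
proof -
  have "even (fan s u w + nc s w + nc s [u, hd w] + nc s [last w, u])"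
    by (rule fan_par) (use assms(4) in simp)
  moreover have "last w = hd w" using assms(1) unfolding cw_def by simp
  then have "nc s [last w, u] = nc s [u, hd w]" by (simp add: insert_commute)
  moreover have "odd (nc s w)" using assms(1) unfolding cw_def by blast
  ultimately have "odd (fan s u w)"
    using par_aux[of "fan s u w" "nc s w" "nc s [u, hd w]"] by metis
  then have "\<exists>i. Suc i < length w \<and> odd (nc s [u, w!i, w!Suc i, u])" by (rule fan_odd)
  then obtain i where i: "Suc i < length w" "odd (nc s [u, w!i, w!Suc i, u])" by blast
  have e: "{w!i, w!Suc i} \<in> E" using assms(1) i(1) unfolding cw_def walk_idx by blast
  have m: "w!i \<in> set w" "w!Suc i \<in> set w" using i(1) by auto
  have e2: "{u, w!i} \<in> E" "{w!Suc i, u} \<in> E" using assms(3) m by (auto simp: insert_commute)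
  have sw: "set w \<subseteq> V" using assms(1) unfolding cw_def by blast
  have "walk E [u, w!i, w!Suc i, u]" using e e2 by simp
  moreover have "set [u, w!i, w!Suc i, u] \<subseteq> V" using sw m assms(2) by auto
  moreover have "[u, w!i, w!Suc i, u] \<noteq> []" "hd [u, w!i, w!Suc i, u] = last [u, w!i, w!Suc i, u]" by simp_all
  ultimately have "cw V E s [u, w!i, w!Suc i, u]" using i(2) unfolding cw_def by blast
  then show ?thesis using assms(4) by (intro exI[of _ "[u, w!i, w!Suc i, u]"]) auto
qed

lemma count_nonedges:
  assumes "finite V" "D \<subseteq> V" "\<forall>u\<in>D. f u \<in> V \<and> f u \<noteq> u \<and> {u, f u} \<notin> E"
    "\<forall>u\<in>D. f u \<in> D \<longrightarrow> f (f u) \<noteq> u"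
  shows "card D \<le> card {e. e \<subseteq> V \<and> card e = 2 \<and> e \<notin> E}"
proof (rule card_inj_on_le[where f = "\<lambda>u. {u, f u}"])
  show "inj_on (\<lambda>u. {u, f u}) D"
  proof (rule inj_onI)
    fix u v assume uv: "u \<in> D" "v \<in> D" "{u, f u} = {v, f v}"
    show "u = v"
    proof (rule ccontr)
      assume "u \<noteq> v"
      then have "u = f v" "f u = v" using uv(3) by (auto simp: doubleton_eq_iff)
      then show False using assms(4) uv by metis
    qed
  qed
  show "(\<lambda>u. {u, f u}) ` D \<subseteq> {e. e \<subseteq> V \<and> card e = 2 \<and> e \<notin> E}"
    using assms(2,3) by auto
  show "finite {e. e \<subseteq> V \<and> card e = 2 \<and> e \<notin> E}"
    using assms(1) by (rule rev_finite_subset[OF finite_Pow_iff[THEN iffD2]]) auto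
qed

lemma final_count:
  assumes "signed_graph V E s" "card V = n" "n \<ge> 1"
    "real (card {e. e \<subseteq> V \<and> card e = 2 \<and> e \<notin> E}) \<ge> real n - real r"
  shows "real (card E) \<le> real n * (real n - 1) / 2 - (real n - real r)"
proof -
  let ?T = "{e. e \<subseteq> V \<and> card e = 2}"
  have fin: "finite V" using assms(1) unfolding signed_graph_def by auto
  have ET: "E \<subseteq> ?T" using assms(1) unfolding signed_graph_def by auto
  have fT: "finite ?T" using fin by (rule rev_finite_subset[OF finite_Pow_iff[THEN iffD2]]) auto
  have N: "{e. e \<subseteq> V \<and> card e = 2 \<and> e \<notin> E} = ?T - E" by auto
  have "card (?T - E) = card ?T - card E" using ET fT by (intro card_Diff_subset) (auto intro: finite_subset)
  moreover have "card E \<le> card ?T" using ET fT by (intro card_mono)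
  ultimately have "card E + card (?T - E) = card ?T" by simp
  moreover have "card ?T = n choose 2" using n_subsets[OF fin, of 2] assms(2) by simp
  moreover have "2 * (n choose 2) = n * (n - 1)"
  proof -
    have "even (n * (n - 1))" by (cases "even n") auto
    then show ?thesis by (simp add: choose_two)
  qed
  ultimately have "2 * real (card E) + 2 * real (card (?T - E)) = real n * (real n - 1)"
    using assms(3) by (metis (no_types, lifting) distrib_left of_nat_1 of_nat_add of_nat_diff of_nat_mult of_nat_numeral)
  then show ?thesis using assms(4) N by simp
qed

lemma split_idx:
  assumes "i < j" "j < length w"
  shows "w = take i w @ [w!i] @ drop (Suc i) (take j w) @ [w!j] @ drop (Suc j) w"
proof -
  have "take j w = take i w @ [w!i] @ drop (Suc i) (take j w)"
    using id_take_nth_drop[of i "take j w"] assms by (simp add: min_def)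
  moreover have "w = take j w @ w!j # drop (Suc j) w" using id_take_nth_drop assms(2) by blast
  ultimately show ?thesis by (metis append.assoc append_Cons append_Nil)
qed

lemma chord_idx:
  assumes "cw V E s w" "i < j" "j < length w" "{w!i, w!j} \<in> E" "Suc i < j" "i + (length w - Suc j) \<ge> 2"
  shows "\<exists>w'. cw V E s w' \<and> length w' < length w"
proof -
  let ?P = "take i w" and ?M = "drop (Suc i) (take j w)" and ?Q = "drop (Suc j) w"
  have e: "w = ?P @ [w!i] @ ?M @ [w!j] @ ?Q" using split_idx assms(2,3) by blast
  have "?M \<noteq> []" using assms(3,5) by simp
  moreover have "length ?P + length ?Q \<ge> 2" using assms(2,3,6) by simp
  moreover have "cw V E s (?P @ [w!i] @ ?M @ [w!j] @ ?Q)" using assms(1) e by metis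
  ultimately have "\<exists>w'. cw V E s w' \<and> length w' < length (?P @ [w!i] @ ?M @ [w!j] @ ?Q)"
    using split_chord[of V E s ?P "w!i" ?M "w!j" ?Q] assms(4) by blast
  then show ?thesis using e by metis
qed

lemma min_len4:
  assumes "cw V E s w" "\<forall>x y. {x,y} \<in> E \<longrightarrow> x \<noteq> y"
  shows "length w \<ge> 4"
proof (rule ccontr)
  assume "\<not> length w \<ge> 4"
  then have "length w = 0 \<or> length w = 1 \<or> length w = 2 \<or> length w = 3" by linarith
  then have "w = [] \<or> (\<exists>x. w = [x]) \<or> (\<exists>x y. w = [x,y]) \<or> (\<exists>x y z. w = [x,y,z])"
    by (auto simp: length_Suc_conv numeral_eq_Suc)
  then consider "w = []" | x where "w = [x]" | x y where "w = [x,y]" | x y z where "w = [x,y,z]"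
    by blast
  then show False
  proof cases
    case 1 then show ?thesis using assms unfolding cw_def by simp
  next
    case 2 then show ?thesis using assms unfolding cw_def by simp
  next
    case 3 then show ?thesis using assms unfolding cw_def by auto
  next
    case 4 then show ?thesis using assms unfolding cw_def by (auto simp: insert_commute)
  qed
qed

theorem theorem1p7:
  fixes V :: "'a set" and E :: "'a set set" and sigma :: "'a set \<Rightarrow> int" and r n :: nat
  assumes "r \<ge> 2" and "n \<ge> 1"
    and "signed_graph V E sigma" and "card V = n"
    and "\<not> balanced V E sigma"
    and "unbalanced_Kk_free (r + 1) V E sigma"
  shows "real (card E) \<le> real n * (real n - 1) / 2 - (real n - real r)"
proof -
  let ?s = sigma
  let ?N = "{e. e \<subseteq> V \<and> card e = 2 \<and> e \<notin> E}"
  have fin: "finite V" and Ecard: "\<forall>e\<in>E. e \<subseteq> V \<and> card e = 2"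
    using assms(3) unfolding signed_graph_def by auto
  have noloop: "\<forall>x y. {x,y} \<in> E \<longrightarrow> x \<noteq> y" using Ecard by fastforce
  obtain vs0 where c0: "is_cycle V E vs0" "\<not> positive_cycle ?s vs0"
    using assms(5) unfolding balanced_def by blast
  have "cw V E ?s (vs0 @ [hd vs0])"
  proof -
    have ne: "vs0 \<noteq> []" and d: "distinct vs0" and l: "3 \<le> length vs0"
      using c0(1) unfolding is_cycle_def by auto
    have "walk E (vs0 @ [hd vs0])" using cyc_walk[OF ne] c0(1) unfolding is_cycle_def by auto
    moreover have "odd (nc ?s (vs0 @ [hd vs0]))" using cyc_nc[OF d l, of ?s] c0(2)
      unfolding positive_cycle_def by simp
    ultimately show ?thesis using ne c0(1) unfolding cw_def is_cycle_def by auto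
  qed
  then obtain w where cw: "cw V E ?s w" and mn: "\<forall>w'. cw V E ?s w' \<longrightarrow> length w \<le> length w'"
    using ex_has_least_nat[of "cw V E ?s" _ length] by blast
  have nosh: "\<not> (\<exists>w'. cw V E ?s w' \<and> length w' < length w)" using mn by (meson not_less)
  have L4: "length w \<ge> 4" using min_len4[OF cw noloop] .
  have wne: "w \<noteq> []" using L4 by auto
  define vs where "vs = butlast w"
  have wsplit: "w = vs @ [last w]" unfolding vs_def using wne by simp
  have dist: "distinct vs"
  proof (rule ccontr)
    assume "\<not> distinct vs"
    then obtain xs y ys zs where "vs = xs@[y]@ys@[y]@zs" using not_distinct_decomp by blast
    then have "w = xs@[y]@ys@[y]@(zs@[last w])" using wsplit by simp
    then show False using split_repeat[of V E ?s xs y ys "zs@[last w]"] cw nosh by auto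
  qed
  define k where "k = length vs"
  have k3: "k \<ge> 3" unfolding k_def vs_def using L4 by simp
  have vne: "vs \<noteq> []" using k3 k_def by auto
  have hdv: "hd vs = hd w" using wsplit vne by (metis hd_append2)
  have wv: "w = vs @ [hd vs]" using wsplit hdv cw unfolding cw_def by simp
  have lw: "length w = k + 1" using wv k_def by simp
  have wi: "\<And>i. i < k \<Longrightarrow> w!i = vs!i" using wv k_def by (simp add: nth_append)
  have wk: "w!k = vs!0" using wv k_def vne by (simp add: nth_append hd_conv_nth)
  have setw: "set w = set vs" using wv vne by auto
  have vsV: "set vs \<subseteq> V" using cw setw unfolding cw_def by auto
  have bound: "real (card ?N) \<ge> real n - real r"
  proof (cases "k = 3")
    case True
    then obtain a b c where abc: "vs = [a,b,c]" using k_def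
      by (metis (no_types, lifting) length_0_conv length_Suc_conv numeral_3_eq_3)
    have w3: "w = [a,b,c,a]" using wv abc by simp
    have dabc: "a \<noteq> b" "b \<noteq> c" "a \<noteq> c" using dist abc by auto
    have eabc: "{a,b} \<in> E" "{b,c} \<in> E" "{c,a} \<in> E" using cw w3 unfolding cw_def by auto
    have abcV: "a \<in> V" "b \<in> V" "c \<in> V" using vsV abc by auto
    define cl where "cl K \<longleftrightarrow> K \<subseteq> V \<and> {a,b,c} \<subseteq> K \<and> (\<forall>x\<in>K. \<forall>y\<in>K. x \<noteq> y \<longrightarrow> {x,y} \<in> E)" for K
    have "cl {a,b,c}" unfolding cl_def using eabc abcV by (auto simp: insert_commute)
    moreover have "\<forall>K. cl K \<longrightarrow> card K < card V + 1"
      unfolding cl_def using fin by (simp add: card_mono le_imp_less_Suc)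
    ultimately obtain W where clW: "cl W" and mx: "\<forall>K. cl K \<longrightarrow> card K \<le> card W"
      using ex_has_greatest_nat[of cl "{a,b,c}" card "card V + 1"] by blast
    have WV: "W \<subseteq> V" and abcW: "{a,b,c} \<subseteq> W" and cliW: "\<forall>x\<in>W. \<forall>y\<in>W. x \<noteq> y \<longrightarrow> {x,y} \<in> E"
      using clW unfolding cl_def by auto
    have finW: "finite W" using WV fin finite_subset by blast
    have c3: "card {a,b,c} = 3" using dabc by simp
    have Wr: "card W \<le> r"
    proof (rule ccontr)
      assume "\<not> card W \<le> r"
      then have "r - 2 \<le> card (W - {a,b,c})" using card_Diff_subset[of "{a,b,c}" W] abcW c3 by simp
      then obtain T where T: "T \<subseteq> W - {a,b,c}" "card T = r - 2" "finite T"
        by (rule obtain_subset_with_card_n)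
      let ?S = "{a,b,c} \<union> T"
      have cS: "card ?S = r + 1" using card_Un_disjoint[of "{a,b,c}" T] T c3 assms(1) by auto
      have SV: "?S \<subseteq> V" using T abcW WV by auto
      have cliS: "\<forall>x\<in>?S. \<forall>y\<in>?S. x \<noteq> y \<longrightarrow> {x,y} \<in> E" using cliW T abcW by blast
      let ?E' = "{e \<in> E. e \<subseteq> ?S}"
      have "walk ?E' ([a,b,c] @ [hd [a,b,c]])" using eabc by auto
      then have "is_cycle ?S ?E' [a,b,c]" unfolding is_cycle_def
        using cyc_walk[of "[a,b,c]" ?E'] dabc by auto
      moreover have "\<not> positive_cycle ?s [a,b,c]"
        using cyc_nc[of "[a,b,c]" ?s] dabc cw w3 unfolding positive_cycle_def cw_def by simp
      ultimately have "\<not> balanced ?S ?E' ?s" unfolding balanced_def by blast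
      then show False using assms(6) cS SV cliS unfolding unbalanced_Kk_free_def by blast
    qed
    have nonadj: "\<forall>u\<in>V - W. \<exists>x\<in>W. {u,x} \<notin> E"
    proof
      fix u assume u: "u \<in> V - W"
      show "\<exists>x\<in>W. {u,x} \<notin> E"
      proof (rule ccontr)
        assume "\<not> (\<exists>x\<in>W. {u,x} \<notin> E)"
        then have "cl (insert u W)" using clW u unfolding cl_def by (auto simp: insert_commute)
        then have "card (insert u W) \<le> card W" using mx by blast
        then show False using u finW by simp
      qed
    qed
    define f where "f u = (SOME x. x \<in> W \<and> {u,x} \<notin> E)" for u
    have fp: "\<forall>u\<in>V - W. f u \<in> W \<and> {u, f u} \<notin> E"
    proof
      fix u assume "u \<in> V - W"
      then obtain x where "x \<in> W \<and> {u,x} \<notin> E" using nonadj by blast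
      then show "f u \<in> W \<and> {u, f u} \<notin> E" unfolding f_def by (rule someI)
    qed
    have "card (V - W) \<le> card ?N"
    proof (rule count_nonedges[OF fin])
      show "\<forall>u\<in>V - W. f u \<in> V \<and> f u \<noteq> u \<and> {u, f u} \<notin> E"
      proof
        fix u assume u: "u \<in> V - W"
        then have fu: "f u \<in> W" "{u, f u} \<notin> E" using fp by auto
        then show "f u \<in> V \<and> f u \<noteq> u \<and> {u, f u} \<notin> E" using u WV by auto
      qed
      show "\<forall>u\<in>V - W. f u \<in> V - W \<longrightarrow> f (f u) \<noteq> u"
      proof (intro ballI impI)
        fix u assume u: "u \<in> V - W" "f u \<in> V - W"
        then have "f u \<in> W" using fp by auto
        then show "f (f u) \<noteq> u" using u by auto
      qed
    qed auto
    moreover have "card (V - W) = n - card W" using card_Diff_subset[OF finW WV] assms(4) by simp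
    moreover have "card W \<le> n" using card_mono[OF fin WV] assms(4) by simp
    ultimately show ?thesis using Wr by linarith
  next
    case False
    then have k4: "k \<ge> 4" using k3 by simp
    have c1: "{vs!0, vs!j} \<notin> E" if "2 \<le> j" "j \<le> k - 2" for j
    proof
      assume "{vs!0, vs!j} \<in> E"
      then have ej: "{w!0, w!j} \<in> E" using wi that k4 by simp
      have "\<exists>w'. cw V E ?s w' \<and> length w' < length w"
        by (rule chord_idx[OF cw, of 0 j]) (use that lw k4 ej in simp_all)
      then show False using nosh by blast
    qed
    have c2: "{vs!1, vs!(k-1)} \<notin> E"
    proof
      assume "{vs!1, vs!(k-1)} \<in> E"
      then have ej: "{w!1, w!(k-1)} \<in> E" using wi k4 by simp
      have "\<exists>w'. cw V E ?s w' \<and> length w' < length w"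
        by (rule chord_idx[OF cw, of 1 "k-1"]) (use lw k4 ej in simp_all)
      then show False using nosh by blast
    qed
    have wh: "\<forall>u\<in>V - set vs. \<exists>x\<in>set vs. {u,x} \<notin> E"
    proof
      fix u assume u: "u \<in> V - set vs"
      show "\<exists>x\<in>set vs. {u,x} \<notin> E"
      proof (rule ccontr)
        assume "\<not> (\<exists>x\<in>set vs. {u,x} \<notin> E)"
        then show False using wheel[OF cw, of u] u setw lw k4 nosh by auto
      qed
    qed
    define g where "g u = (SOME x. x \<in> set vs \<and> {u,x} \<notin> E)" for u
    have gp: "\<forall>u\<in>V - set vs. g u \<in> set vs \<and> {u, g u} \<notin> E"
    proof
      fix u assume "u \<in> V - set vs"
      then obtain x where "x \<in> set vs \<and> {u,x} \<notin> E" using wh by blast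
      then show "g u \<in> set vs \<and> {u, g u} \<notin> E" unfolding g_def by (rule someI)
    qed
    define f where "f u = (if u \<in> set vs then (if u = vs!(k-1) then vs!1 else vs!0) else g u)" for u
    let ?D = "V - {vs!0, vs!1}"
    have vl: "0 < length vs" "1 < length vs" "k - 1 < length vs" using k4 k_def by auto
    have v01: "vs!0 \<in> set vs" "vs!1 \<in> set vs" "vs!0 \<noteq> vs!1" "vs!1 \<noteq> vs!(k-1)"
    proof -
      show "vs!0 \<in> set vs" by (rule nth_mem) (use vl in simp)
      show "vs!1 \<in> set vs" by (rule nth_mem) (use vl in simp)
      show "vs!0 \<noteq> vs!1" using nth_eq_iff_index_eq[OF dist vl(1) vl(2)] by simp
      show "vs!1 \<noteq> vs!(k-1)" using nth_eq_iff_index_eq[OF dist vl(2) vl(3)] k4 by simp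
    qed
    have fD: "\<forall>u\<in>?D. f u \<in> V \<and> f u \<noteq> u \<and> {u, f u} \<notin> E \<and> f u \<in> set vs"
    proof
      fix u assume u: "u \<in> ?D"
      show "f u \<in> V \<and> f u \<noteq> u \<and> {u, f u} \<notin> E \<and> f u \<in> set vs"
      proof (cases "u \<in> set vs")
        case uin: True
        then obtain j where j: "j < k" "u = vs!j" using k_def by (metis in_set_conv_nth)
        have j01: "j \<noteq> 0" "j \<noteq> 1" using u j by (metis DiffD2 insertCI)+
        show ?thesis
        proof (cases "j = k - 1")
          case True
          then have fu: "f u = vs!1" unfolding f_def using uin j by simp
          show ?thesis using c2 j v01 vsV u True unfolding fu by (auto simp: insert_commute)
        next
          case False
          then have "u \<noteq> vs!(k-1)" using j dist k_def k4 by (simp add: nth_eq_iff_index_eq)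
          then have fu: "f u = vs!0" unfolding f_def using uin by simp
          have "{vs!0, vs!j} \<notin> E" using c1[of j] j j01 False by simp
          then show ?thesis using j v01 vsV u unfolding fu by (auto simp: insert_commute)
        qed
      next
        case False
        then have fu: "f u = g u" unfolding f_def by simp
        have "g u \<in> set vs" "{u, g u} \<notin> E" using gp u False by auto
        then show ?thesis using False vsV unfolding fu by auto
      qed
    qed
    have "card ?D \<le> card ?N"
    proof (rule count_nonedges[OF fin])
      show "\<forall>u\<in>?D. f u \<in> ?D \<longrightarrow> f (f u) \<noteq> u"
      proof (intro ballI impI)
        fix u assume u: "u \<in> ?D" "f u \<in> ?D"
        have "f u \<in> set vs" using fD u by blast
        then have "f (f u) \<in> set vs" unfolding f_def using v01 by auto
        moreover have "u \<notin> set vs" using u fD unfolding f_def by (auto split: if_splits)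
        ultimately show "f (f u) \<noteq> u" by auto
      qed
    qed (use fD in auto)
    moreover have "card ?D = n - 2"
    proof -
      have sub: "{vs!0, vs!1} \<subseteq> V" using v01 vsV by auto
      have "card {vs!0, vs!1} = 2" using v01 by simp
      then show ?thesis using card_Diff_subset[OF _ sub] assms(4) by simp
    qed
    moreover have "card {vs!0, vs!1} \<le> n" using card_mono[OF fin, of "{vs!0, vs!1}"] v01 vsV assms(4) by auto
    ultimately show ?thesis using assms(1) v01 by auto
  qed
  show ?thesis by (rule final_count[OF assms(3,4,2) bound])
qed

end
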